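(* Let $d\ge 2$ be an integer. Let $(\mathrm{CD}_d,H_d)$ be a $2$-weak combinatorial description of the elementary differentials in dimension $d$ which is compatible with $\mathrm{RT}$ via equivariant surjections $p_n:\mathrm{RT}(n)\to\mathrm{CD}_d(n)$. Then every $p_n$ is a bijection; that is, $\mathrm{RT}$ is the only $2$-weak combinatorial description of $\mathcal{W}_d$ compatible with $\mathrm{RT}$.
   Context: Rooted trees: a rooted tree on $[n]$ is a set $E$ of ordered pairs (an edge $(v,w)$ means $w$ is a child of $v$) such that exactly one vertex (the root) has no parent, every other vertex has exactly one parent, and all vertices are connected to the root by following parents; $\mathrm{RT}(n)$ is the set of these, with $\mathfrak{S}_n$ acting by relabelling. $\mathcal{C}_d=C^\infty(\mathbb{R}^d,\mathbb{R}^d)$. For $\tau$ with root $r$ whose children are $v_1,\dots,v_k$, recursively $F(\tau)((f^i)_{i})=\sum_{j_1,\dots,j_k=1}^d F(\tau_{v_1})(\cdots)_{j_1}\cdots F(\tau_{v_k})(\cdots)_{j_k}\,\partial_{j_1}\cdots\partial_{j_k}f^r$, with $\tau_{v_m}$ the subtree of $v_m$ and its descendants evaluated on the $f^i$ indexed by its vertices, $(\cdot)_j$ the $j$-th coordinate, $\partial_j=\partial/\partial x_j$ (single vertex: $F(\tau)=f^r$). Labellings: fix $\ell$ (here $\ell=2$). $\mathfrak{S}_n$ acts on $[\ell]^n$ by permuting coordinates; for $k=(k_1,\dots,k_\ell)\in\mathbb{N}^\ell$ with $\sum k_i=n$, $[\ell]^{k}$ is the set of words with exactly $k_i$ letters $i$.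 For a sequence $C=(C(n))_n$ of $\mathfrak{S}_n$-sets, $\mathrm{L}^{k}(C)=(C(n)\times[\ell]^{k})/\big((a,\sigma.x)\sim(\sigma.a,x)\big)$. For $\varphi:[\ell]\to[\ell]$, $k^\varphi_i=\sum_{j\in\varphi^{-1}(i)}k_j$ and $\varphi_*:\mathrm{L}^{k}(C)\to\mathrm{L}^{k^\varphi}(C)$, $(c,(x_1,\dots,x_n))\mapsto(c,(\varphi(x_1),\dots,\varphi(x_n)))$; on maps $\Phi:\mathcal{C}_d^\ell\to\mathcal{C}_d$, $(\varphi_*\Phi)(f^1,\dots,f^\ell)=\Phi(f^{\varphi(1)},\dots,f^{\varphi(\ell)})$. $F^{k}((\tau,x))(f^1,\dots,f^\ell)=F(\tau)(f^{x_1},\dots,f^{x_n})$, and $\mathcal{W}_d^{k}$ is the real span of $F^{k}(\mathrm{L}^{k}(\mathrm{RT}))$ (maps $\mathcal{C}_d^\ell\to\mathcal{C}_d$ homogeneous of degree $k_i$ in the $i$-th input). An $\ell$-weak combinatorial description is a sequence $\mathrm{CD}_d=(\mathrm{CD}_d(n))_n$ of $\mathfrak{S}_n$-sets together with maps $H_d^{k}:\mathrm{L}^{k}(\mathrm{CD}_d)\to\mathcal{W}_d^{k}$ for all $k\in\mathbb{N}^\ell$, whose images span $\mathcal{W}_d^{k}$, and with $H_d^{k^\varphi}\circ\varphi_*=\varphi_*\circ H_d^{k}$ for every $\varphi:[\ell]\to[\ell]$. It is compatible with $\mathrm{RT}$ if there are $\mathfrak{S}_n$-equivariant surjections $p_n:\mathrm{RT}(n)\to\mathrm{CD}_d(n)$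 with $F^{k}((\tau,x))=H^{k}_d((p_n(\tau),x))$ for all $\tau\in\mathrm{RT}(n)$, $x\in[\ell]^{k}$. *)

theory Defs
  imports "HOL-Analysis.Analysis" "HOL-Combinatorics.Permutations"
begin

text \<open>The dimension d is CARD('d) for a finite index type 'd; points of R^d are real^'d.\<close>

definition pd :: "'d::finite \<Rightarrow> (real^'d \<Rightarrow> real^'d) \<Rightarrow> (real^'d \<Rightarrow> real^'d)" where
  "pd j f = (\<lambda>x. frechet_derivative f (at x) (axis j 1))"

primrec iter_pd :: "'d::finite list \<Rightarrow> (real^'d \<Rightarrow> real^'d) \<Rightarrow> (real^'d \<Rightarrow> real^'d)" where
  "iter_pd [] f = f"
| "iter_pd (j # js) f = pd j (iter_pd js f)"

definition smooth :: "(real^'d::finite \<Rightarrow> real^'d) \<Rightarrow> bool" where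
  "smooth f \<longleftrightarrow> (\<forall>js x. iter_pd js f differentiable (at x))"

type_synonym 'd vf = "real^'d \<Rightarrow> real^'d"
type_synonym 'd wmap = "(nat \<Rightarrow> 'd vf) \<Rightarrow> 'd vf"

text \<open>A map C_d^l -> C_d is represented by a function on index-nat families of vector fields;
  Crestrict l canonicalises it to its restriction to smooth l-tuples (indices 0..<l).\<close>
definition Crestrict :: "nat \<Rightarrow> ('d::finite) wmap \<Rightarrow> 'd wmap" where
  "Crestrict l \<Phi> = (\<lambda>fs. if (\<forall>i<l. smooth (fs i))
       then \<Phi> (\<lambda>i. if i < l then fs i else (\<lambda>_. 0)) else (\<lambda>_. 0))"

definition pushC :: "nat \<Rightarrow> (nat \<Rightarrow> nat) \<Rightarrow> ('d::finite) wmap \<Rightarrow> 'd wmap" where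
  "pushC l \<phi> \<Phi> = Crestrict l (\<lambda>fs. Crestrict l \<Phi> (\<lambda>i. fs (\<phi> i)))"

definition lspan :: "('d::finite) wmap set \<Rightarrow> 'd wmap set" where
  "lspan S = {(\<lambda>fs y. \<Sum>i<m. c i *\<^sub>R g i fs y) | (m::nat) c g. \<forall>i<m. g i \<in> S}"

definition RT :: "nat \<Rightarrow> (nat \<times> nat) set set" where
  "RT n = {E. E \<subseteq> {..<n} \<times> {..<n} \<and>
     (\<exists>r<n. (\<forall>v. (v, r) \<notin> E) \<and>
        (\<forall>w<n. w \<noteq> r \<longrightarrow> (\<exists>!v. (v, w) \<in> E)) \<and>
        (\<forall>w<n. (r, w) \<in> E\<^sup>*))}"

definition tree_root :: "nat \<Rightarrow> (nat \<times> nat) set \<Rightarrow> nat" where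
  "tree_root n E = (THE r. r < n \<and> (\<forall>v. (v, r) \<notin> E))"

definition children :: "(nat \<times> nat) set \<Rightarrow> nat \<Rightarrow> nat set" where
  "children E v = {w. (v, w) \<in> E}"

definition relabel :: "(nat \<Rightarrow> nat) \<Rightarrow> (nat \<times> nat) set \<Rightarrow> (nat \<times> nat) set" where
  "relabel \<sigma> E = (\<lambda>(v, w). (\<sigma> v, \<sigma> w)) ` E"

text \<open>Elementary differential of the subtree at v (fuel m >= height suffices):
  F(tau_v)(g) = sum over j : children(v) -> [d] of
     prod_c F(tau_c)(g)_{j c} * (d_{j c1} ... d_{j ck} g v).\<close>
primrec evF :: "(nat \<times> nat) set \<Rightarrow> (nat \<Rightarrow> ('d::finite) vf) \<Rightarrow> nat \<Rightarrow> nat \<Rightarrow> 'd vf" where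
  "evF E g 0 v = g v"
| "evF E g (Suc m) v = (\<lambda>y. \<Sum>j\<in>PiE (children E v) (\<lambda>_. UNIV).
      (\<Prod>c\<in>children E v. (evF E g m c y) $ (j c)) *\<^sub>R
        iter_pd (map j (sorted_list_of_set (children E v))) (g v) y)"

definition F :: "nat \<Rightarrow> (nat \<times> nat) set \<Rightarrow> (nat \<Rightarrow> ('d::finite) vf) \<Rightarrow> 'd vf" where
  "F n E g = evF E g n (tree_root n E)"

definition words :: "nat \<Rightarrow> (nat \<Rightarrow> nat) \<Rightarrow> nat list set" where
  "words l k = {x. length x = (\<Sum>i<l. k i) \<and> set x \<subseteq> {..<l} \<and> (\<forall>i<l. count_list x i = k i)}"

definition supp_ok :: "nat \<Rightarrow> (nat \<Rightarrow> nat) \<Rightarrow> bool" where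
  "supp_ok l k \<longleftrightarrow> (\<forall>i\<ge>l. k i = 0)"

definition Fk :: "nat \<Rightarrow> (nat \<times> nat) set \<Rightarrow> nat list \<Rightarrow> ('d::finite) wmap" where
  "Fk n E x = (\<lambda>fs. F n E (\<lambda>v. fs (x ! v)))"

definition Wk :: "'d itself \<Rightarrow> nat \<Rightarrow> (nat \<Rightarrow> nat) \<Rightarrow> ('d::finite) wmap set" where
  "Wk dt l k = lspan {Crestrict l (Fk n E x) :: 'd wmap | n E x. E \<in> RT n \<and> x \<in> words l k \<and> length x = n}"

definition permw :: "(nat \<Rightarrow> nat) \<Rightarrow> nat list \<Rightarrow> nat list" where
  "permw \<sigma> y = map (\<lambda>i. y ! \<sigma> i) [0..<length y]"

text \<open>Generating relation (a, sigma.x) ~ (sigma.a, x), with the coordinate action chosen so that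
  F^k is well defined (i.e. L^k(C) is the set of orbits of the diagonal S_n action).\<close>
definition lrel :: "(nat \<Rightarrow> 'c set) \<Rightarrow> (nat \<Rightarrow> (nat \<Rightarrow> nat) \<Rightarrow> 'c \<Rightarrow> 'c)
    \<Rightarrow> (('c \<times> nat list) \<times> ('c \<times> nat list)) set" where
  "lrel C act = {((a, permw \<sigma> y), (act (length y) \<sigma> a, y)) | a y \<sigma>.
       a \<in> C (length y) \<and> \<sigma> permutes {..<length y}}"

definition lclass :: "(nat \<Rightarrow> 'c set) \<Rightarrow> (nat \<Rightarrow> (nat \<Rightarrow> nat) \<Rightarrow> 'c \<Rightarrow> 'c)
    \<Rightarrow> 'c \<times> nat list \<Rightarrow> ('c \<times> nat list) set" where
  "lclass C act ax = ((lrel C act \<union> (lrel C act)\<inverse>)\<^sup>*) `` {ax}"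

definition Lset :: "(nat \<Rightarrow> 'c set) \<Rightarrow> (nat \<Rightarrow> (nat \<Rightarrow> nat) \<Rightarrow> 'c \<Rightarrow> 'c) \<Rightarrow> nat
    \<Rightarrow> (nat \<Rightarrow> nat) \<Rightarrow> ('c \<times> nat list) set set" where
  "Lset C act l k = {lclass C act (a, x) | a x. x \<in> words l k \<and> a \<in> C (length x)}"

definition kphi :: "nat \<Rightarrow> (nat \<Rightarrow> nat) \<Rightarrow> (nat \<Rightarrow> nat) \<Rightarrow> (nat \<Rightarrow> nat)" where
  "kphi l \<phi> k = (\<lambda>i. \<Sum>j\<in>{j. j < l \<and> \<phi> j = i}. k j)"

definition Sn_sets :: "(nat \<Rightarrow> 'c set) \<Rightarrow> (nat \<Rightarrow> (nat \<Rightarrow> nat) \<Rightarrow> 'c \<Rightarrow> 'c) \<Rightarrow> bool" where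
  "Sn_sets C act \<longleftrightarrow> (\<forall>n. (\<forall>a\<in>C n. act n id a = a) \<and>
     (\<forall>\<sigma> a. \<sigma> permutes {..<n} \<longrightarrow> a \<in> C n \<longrightarrow> act n \<sigma> a \<in> C n) \<and>
     (\<forall>\<sigma> \<tau> a. \<sigma> permutes {..<n} \<longrightarrow> \<tau> permutes {..<n} \<longrightarrow> a \<in> C n \<longrightarrow>
          act n (\<sigma> \<circ> \<tau>) a = act n \<sigma> (act n \<tau> a)))"

definition weak_comb_descr :: "'d itself \<Rightarrow> nat \<Rightarrow> (nat \<Rightarrow> 'c set)
    \<Rightarrow> (nat \<Rightarrow> (nat \<Rightarrow> nat) \<Rightarrow> 'c \<Rightarrow> 'c)
    \<Rightarrow> ((nat \<Rightarrow> nat) \<Rightarrow> ('c \<times> nat list) set \<Rightarrow> ('d::finite) wmap) \<Rightarrow> bool" where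
  "weak_comb_descr dt l C act H \<longleftrightarrow> Sn_sets C act \<and>
     (\<forall>k. supp_ok l k \<longrightarrow>
        (\<forall>\<xi>\<in>Lset C act l k. Crestrict l (H k \<xi>) \<in> Wk dt l k) \<and>
        lspan ((\<lambda>\<xi>. Crestrict l (H k \<xi>)) ` Lset C act l k) = Wk dt l k \<and>
        (\<forall>\<phi>. (\<forall>i<l. \<phi> i < l) \<longrightarrow>
           (\<forall>a x. x \<in> words l k \<longrightarrow> a \<in> C (length x) \<longrightarrow>
              Crestrict l (H (kphi l \<phi> k) (lclass C act (a, map \<phi> x)))
                = pushC l \<phi> (H k (lclass C act (a, x))))))"

definition compatible_RT :: "nat \<Rightarrow> (nat \<Rightarrow> 'c set)
    \<Rightarrow> (nat \<Rightarrow> (nat \<Rightarrow> nat) \<Rightarrow> 'c \<Rightarrow> 'c)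
    \<Rightarrow> ((nat \<Rightarrow> nat) \<Rightarrow> ('c \<times> nat list) set \<Rightarrow> ('d::finite) wmap)
    \<Rightarrow> (nat \<Rightarrow> (nat \<times> nat) set \<Rightarrow> 'c) \<Rightarrow> bool" where
  "compatible_RT l C act H p \<longleftrightarrow>
     (\<forall>n. p n ` RT n = C n \<and>
        (\<forall>\<sigma> E. \<sigma> permutes {..<n} \<longrightarrow> E \<in> RT n \<longrightarrow> p n (relabel \<sigma> E) = act n \<sigma> (p n E))) \<and>
     (\<forall>k. supp_ok l k \<longrightarrow> (\<forall>n E x. E \<in> RT n \<longrightarrow> x \<in> words l k \<longrightarrow> length x = n \<longrightarrow>
        Crestrict l (Fk n E x) = Crestrict l (H k (lclass C act (p n E, x)))))"

end

theory Submission
  imports Defs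
begin


lemma RT_D:
  assumes "E \<in> RT n"
  obtains r where "r < n" "\<And>v. (v, r) \<notin> E" "\<And>w. w < n \<Longrightarrow> w \<noteq> r \<Longrightarrow> \<exists>!v. (v, w) \<in> E"
    "\<And>w. w < n \<Longrightarrow> (r, w) \<in> E\<^sup>*" "E \<subseteq> {..<n} \<times> {..<n}"
  using assms unfolding RT_def by blast

lemma depth_le:
  assumes E: "E \<subseteq> {..<n} \<times> {..<n}" and root: "\<And>v. (v, r) \<notin> E"
    and uniq: "\<And>w. w < n \<Longrightarrow> w \<noteq> r \<Longrightarrow> \<exists>!v. (v, w) \<in> E"
  shows "(r, w) \<in> E ^^ a \<Longrightarrow> (s, w) \<in> E ^^ b \<Longrightarrow> b \<le> a"
proof (induction a arbitrary: w b s)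
  case 0
  then have "w = r" by simp
  show ?case
  proof (cases b)
    case (Suc b')
    with 0 \<open>w = r\<close> root show ?thesis by (auto elim: relpow_Suc_E)
  qed simp
next
  case (Suc a)
  from Suc.prems(1) obtain w' where w': "(r, w') \<in> E ^^ a" "(w', w) \<in> E" by (auto elim: relpow_Suc_E)
  show ?case
  proof (cases b)
    case (Suc b')
    with Suc.prems(2) obtain z where z: "(s, z) \<in> E ^^ b'" "(z, w) \<in> E" by (auto elim: relpow_Suc_E)
    have "w \<noteq> r" using w' root by auto
    moreover have "w < n" using w' E by auto
    ultimately have "z = w'" using uniq z w' by blast
    then show ?thesis using Suc.IH[OF w'(1)] z Suc by auto
  qed simp
qed

lemma RT_acyclic:
  assumes "E \<in> RT n"
  shows "(u, u) \<notin> E\<^sup>+"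
proof
  assume c: "(u, u) \<in> E\<^sup>+"
  obtain r where r: "r < n" "\<And>v. (v, r) \<notin> E" "\<And>w. w < n \<Longrightarrow> w \<noteq> r \<Longrightarrow> \<exists>!v. (v, w) \<in> E"
    "\<And>w. w < n \<Longrightarrow> (r, w) \<in> E\<^sup>*" "E \<subseteq> {..<n} \<times> {..<n}" using RT_D[OF assms] by blast
  have "u < n" using c r(5) by (auto elim: tranclE)
  then obtain m where m: "(r, u) \<in> E ^^ m" using r(4) rtrancl_power by blast
  obtain j where j: "j > 0" "(u, u) \<in> E ^^ j" using c trancl_power by blast
  have "(r, u) \<in> E ^^ (m + j)" using m j relpow_add by blast
  from depth_le[OF r(5) r(2) r(3) m this] j show False by simp
qed

lemma RT_depth_bound:
  assumes "E \<in> RT n" "r < n" "\<And>v. (v, r) \<notin> E" "(r, w) \<in> E ^^ m"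
  shows "m < n"
proof -
  obtain r' where r: "r' < n" "\<And>v. (v, r') \<notin> E" "\<And>w. w < n \<Longrightarrow> w \<noteq> r' \<Longrightarrow> \<exists>!v. (v, w) \<in> E"
    "\<And>w. w < n \<Longrightarrow> (r', w) \<in> E\<^sup>*" "E \<subseteq> {..<n} \<times> {..<n}" using RT_D[OF assms(1)] by blast
  have "r' = r" using r(3)[OF assms(2)] assms(3) by blast
  note r = r[unfolded this]
  obtain f where f: "f 0 = r" "f m = w" "\<And>i. i < m \<Longrightarrow> (f i, f (Suc i)) \<in> E"
    using assms(4) relpow_fun_conv by metis
  have fp: "(r, f i) \<in> E ^^ i" if "i \<le> m" for i using that
  proof (induction i)
    case 0 then show ?case using f by simp
  next
    case (Suc i) then show ?case using f(3)[of i] by auto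
  qed
  have inj: "inj_on f {..m}"
  proof (rule inj_onI)
    fix i j assume ij: "i \<in> {..m}" "j \<in> {..m}" "f i = f j"
    have "j \<le> i" using depth_le[OF r(5) r(2) r(3) fp[of i] ] fp[of j] ij by auto
    moreover have "i \<le> j" using depth_le[OF r(5) r(2) r(3) fp[of j] ] fp[of i] ij by auto
    ultimately show "i = j" by simp
  qed
  have sub: "f ` {..m} \<subseteq> {..<n}"
  proof
    fix y assume "y \<in> f ` {..m}"
    then obtain i where i: "i \<le> m" "y = f i" by auto
    show "y \<in> {..<n}"
    proof (cases i)
      case 0 then show ?thesis using i f assms(2) by simp
    next
      case (Suc i') then show ?thesis using f(3)[of i'] i r(5) by auto
    qed
  qed
  have "card {..m} \<le> card {..<n}" using card_inj_on_le[OF inj sub] by simp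
  then show ?thesis by simp
qed

lemma RT_root_unique:
  assumes "E \<in> RT n" "r < n" "\<And>v. (v, r) \<notin> E"
  shows "tree_root n E = r"
proof -
  obtain r' where r: "r' < n" "\<And>v. (v, r') \<notin> E" "\<And>w. w < n \<Longrightarrow> w \<noteq> r' \<Longrightarrow> \<exists>!v. (v, w) \<in> E"
    "\<And>w. w < n \<Longrightarrow> (r', w) \<in> E\<^sup>*" "E \<subseteq> {..<n} \<times> {..<n}"
    using RT_D[OF assms(1)] by blast
  have eq: "y = r'" if yy: "y < n" "\<forall>v. (v, y) \<notin> E" for y
  proof (rule ccontr)
    assume "y \<noteq> r'"
    then obtain v where "(v, y) \<in> E" using r(3)[OF yy(1)] by blast
    then show False using yy(2) by blast
  qed
  have "r = r'" using eq[OF assms(2)] assms(3) by blast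
  show ?thesis unfolding tree_root_def
  proof (rule the_equality)
    show "r < n \<and> (\<forall>v. (v, r) \<notin> E)" using assms(2,3) by simp
    fix y assume "y < n \<and> (\<forall>v. (v, y) \<notin> E)"
    then have "y = r'" using eq by simp
    then show "y = r" using \<open>r = r'\<close> by simp
  qed
qed

definition upclosed :: "(nat \<times> nat) set \<Rightarrow> nat set \<Rightarrow> bool" where
  "upclosed E S \<longleftrightarrow> (\<forall>s t. (s, t) \<in> E \<longrightarrow> t \<in> S \<longrightarrow> s \<in> S)"

lemma anc_eq:
  assumes E1: "E1 \<subseteq> {..<n} \<times> {..<n}" and E2: "E2 \<subseteq> {..<n} \<times> {..<n}"
    and cl: "\<And>S. S \<subseteq> {..<n} \<Longrightarrow> upclosed E2 S \<Longrightarrow> upclosed E1 S"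
    and t: "t < n" and st: "(s, t) \<in> E1\<^sup>*"
  shows "(s, t) \<in> E2\<^sup>*"
proof -
  let ?S = "{s. s < n \<and> (s, t) \<in> E2\<^sup>*}"
  have "upclosed E2 ?S" unfolding upclosed_def
  proof (intro allI impI)
    fix s' t' assume a: "(s', t') \<in> E2" "t' \<in> ?S"
    then have "s' < n" using E2 by auto
    have "(t', t) \<in> E2\<^sup>*" using a(2) by simp
    then have "(s', t) \<in> E2\<^sup>*" by (rule converse_rtrancl_into_rtrancl[OF a(1)])
    then show "s' \<in> ?S" using \<open>s' < n\<close> by simp
  qed
  then have u: "upclosed E1 ?S" by (intro cl) auto
  from st have "s \<in> ?S"
  proof (induction rule: converse_rtrancl_induct)
    case base then show ?case using t by simp
  next
    case (step y z)
    show ?case using u[unfolded upclosed_def, rule_format, OF step(1) step(3)] .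
  qed
  then show ?thesis by simp
qed

lemma RT_sub:
  assumes R1: "E1 \<in> RT n" and R2: "E2 \<in> RT n"
    and cl: "\<And>S. S \<subseteq> {..<n} \<Longrightarrow> upclosed E1 S \<longleftrightarrow> upclosed E2 S"
  shows "E1 \<subseteq> E2"
proof
  fix e assume e: "e \<in> E1"
  obtain v u where vu: "e = (v, u)" by force
  obtain r1 where r1: "r1 < n" "\<And>v. (v, r1) \<notin> E1" "\<And>w. w < n \<Longrightarrow> w \<noteq> r1 \<Longrightarrow> \<exists>!v. (v, w) \<in> E1"
    "\<And>w. w < n \<Longrightarrow> (r1, w) \<in> E1\<^sup>*" "E1 \<subseteq> {..<n} \<times> {..<n}" using RT_D[OF R1] by blast
  obtain r2 where r2: "r2 < n" "\<And>v. (v, r2) \<notin> E2" "\<And>w. w < n \<Longrightarrow> w \<noteq> r2 \<Longrightarrow> \<exists>!v. (v, w) \<in> E2"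
    "\<And>w. w < n \<Longrightarrow> (r2, w) \<in> E2\<^sup>*" "E2 \<subseteq> {..<n} \<times> {..<n}" using RT_D[OF R2] by blast
  have A12: "(s, t) \<in> E2\<^sup>*" if "t < n" "(s, t) \<in> E1\<^sup>*" for s t
    by (rule anc_eq[OF r1(5) r2(5) _ that]) (simp add: cl)
  have A21: "(s, t) \<in> E1\<^sup>*" if "t < n" "(s, t) \<in> E2\<^sup>*" for s t
    by (rule anc_eq[OF r2(5) r1(5) _ that]) (simp add: cl)
  have vu1: "(v, u) \<in> E1" using e vu by simp
  have un: "u < n" "v < n" using vu1 r1(5) by auto
  have "v \<noteq> u" using RT_acyclic[OF R1, of u] vu1 by auto
  have "u \<noteq> r2"
  proof
    assume "u = r2"
    have "(v, u) \<in> E2\<^sup>*" using A12[OF un(1)] vu1 by auto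
    then have "v = u" using \<open>u = r2\<close> r2(2) by (metis rtranclE)
    then show False using \<open>v \<noteq> u\<close> by simp
  qed
  then obtain p where p: "(p, u) \<in> E2" using r2(3)[OF un(1)] by blast
  have "p \<noteq> u" using RT_acyclic[OF R2, of u] p by auto
  have "u \<noteq> r1" using vu1 r1(2) by auto
  have pv1: "(p, v) \<in> E1\<^sup>*"
  proof -
    have "(p, u) \<in> E1\<^sup>*" using A21[OF un(1)] p by auto
    then obtain z where z: "(p, z) \<in> E1\<^sup>*" "(z, u) \<in> E1" using \<open>p \<noteq> u\<close> by (metis rtranclE)
    have "z = v" using r1(3)[OF un(1) \<open>u \<noteq> r1\<close>] z(2) vu1 by blast
    then show ?thesis using z by simp
  qed
  have vp1: "(v, p) \<in> E1\<^sup>*"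
  proof -
    have "(v, u) \<in> E2\<^sup>*" using A12[OF un(1)] vu1 by auto
    then obtain z where z: "(v, z) \<in> E2\<^sup>*" "(z, u) \<in> E2" using \<open>v \<noteq> u\<close> by (metis rtranclE)
    have "z = p" using r2(3)[OF un(1) \<open>u \<noteq> r2\<close>] z(2) p by blast
    then have "(v, p) \<in> E2\<^sup>*" using z by simp
    moreover have "p < n" using p r2(5) by auto
    ultimately show ?thesis using A21 by blast
  qed
  have "p = v"
  proof (rule ccontr)
    assume "p \<noteq> v"
    then have "(p, v) \<in> E1\<^sup>+" using pv1 by (auto simp: rtrancl_eq_or_trancl)
    then have "(p, p) \<in> E1\<^sup>+" using vp1 by (rule trancl_rtrancl_trancl)
    then show False using RT_acyclic[OF R1] by blast
  qed
  then show "e \<in> E2" using p vu by simp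
qed

lemma RT_eq:
  assumes R1: "E1 \<in> RT n" and R2: "E2 \<in> RT n"
    and cl: "\<And>S. S \<subseteq> {..<n} \<Longrightarrow> upclosed E1 S \<longleftrightarrow> upclosed E2 S"
  shows "E1 = E2"
proof
  show "E1 \<subseteq> E2" by (rule RT_sub[OF R1 R2 cl])
  show "E2 \<subseteq> E1" by (rule RT_sub[OF R2 R1]) (simp add: cl)
qed



definition fam :: "real^'d::finite \<Rightarrow> real^'d \<Rightarrow> real \<Rightarrow> 'd vf" where
  "fam lam w c = (\<lambda>y. (c * exp (lam \<bullet> y)) *\<^sub>R w)"

lemma fam_deriv: "(fam lam w c has_derivative (\<lambda>h. (c * (exp (lam \<bullet> x) * (lam \<bullet> h))) *\<^sub>R w)) (at x)"
  unfolding fam_def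
  by (auto intro!: derivative_eq_intros)

lemma pd_fam: "pd j (fam lam w c) = fam lam w (c * lam $ j)"
  unfolding pd_def
  apply (rule ext)
  apply (subst frechet_derivative_at[OF fam_deriv, symmetric])
  apply (simp add: fam_def inner_axis)
  done

lemma iter_pd_fam: "iter_pd js (fam lam w c) = fam lam w (c * prod_list (map (\<lambda>j. lam $ j) js))"
  by (induction js) (simp_all add: pd_fam mult_ac)

lemma smooth_fam: "smooth (fam lam w c)"
  unfolding smooth_def iter_pd_fam
  using fam_deriv unfolding differentiable_def by blast



lemma prod_sorted: "finite C \<Longrightarrow> prod_list (map f (sorted_list_of_set C)) = prod f C"
  by (metis distinct_sorted_list_of_set prod.distinct_set_conv_list set_sorted_list_of_set)

lemma evF_Suc_fam:
  fixes g :: "nat \<Rightarrow> ('d::finite) vf"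
  assumes fin: "finite (children E v)"
    and gv: "g v = fam L W 1"
  shows "evF E g (Suc m) v y = (\<Prod>c\<in>children E v. evF E g m c y \<bullet> L) *\<^sub>R g v y"
proof -
  let ?C = "children E v"
  have "evF E g (Suc m) v y = (\<Sum>j\<in>PiE ?C (\<lambda>_. UNIV).
      (\<Prod>c\<in>?C. (evF E g m c y) $ (j c)) *\<^sub>R iter_pd (map j (sorted_list_of_set ?C)) (g v) y)"
    by simp
  also have "\<dots> = (\<Sum>j\<in>PiE ?C (\<lambda>_. UNIV). (\<Prod>c\<in>?C. (evF E g m c y) $ (j c) * L $ (j c)) *\<^sub>R g v y)"
  proof (rule sum.cong[OF refl])
    fix j
    have "iter_pd (map j (sorted_list_of_set ?C)) (g v) y = (\<Prod>c\<in>?C. L $ (j c)) *\<^sub>R g v y"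
      unfolding gv iter_pd_fam by (simp add: fam_def prod_sorted[OF fin] comp_def)
    then show "(\<Prod>c\<in>?C. (evF E g m c y) $ (j c)) *\<^sub>R iter_pd (map j (sorted_list_of_set ?C)) (g v) y
      = (\<Prod>c\<in>?C. (evF E g m c y) $ (j c) * L $ (j c)) *\<^sub>R g v y"
      by (simp add: prod.distrib)
  qed
  also have "\<dots> = (\<Sum>j\<in>PiE ?C (\<lambda>_. UNIV). (\<Prod>c\<in>?C. (evF E g m c y) $ (j c) * L $ (j c))) *\<^sub>R g v y"
    by (simp add: scaleR_left.sum)
  also have "(\<Sum>j\<in>PiE ?C (\<lambda>_. UNIV). (\<Prod>c\<in>?C. (evF E g m c y) $ (j c) * L $ (j c)))
      = (\<Prod>c\<in>?C. \<Sum>a\<in>UNIV. (evF E g m c y) $ a * L $ a)"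
    by (rule prod_sum_PiE[symmetric]) (auto simp: fin)
  also have "\<dots> = (\<Prod>c\<in>?C. evF E g m c y \<bullet> L)"
    by (simp add: inner_vec_def)
  finally show ?thesis .
qed



definition lamc :: "'d::finite \<Rightarrow> 'd \<Rightarrow> nat \<Rightarrow> real^'d" where
  "lamc a b i = (if i = 0 then axis a 1 else axis a 1 + axis b 1)"
definition wc :: "'d::finite \<Rightarrow> 'd \<Rightarrow> nat \<Rightarrow> real^'d" where
  "wc a b i = (if i = 0 then axis a 1 else axis b 1)"
definition GG :: "'d::finite \<Rightarrow> 'd \<Rightarrow> nat \<Rightarrow> 'd vf" where
  "GG a b i = fam (lamc a b i) (wc a b i) 1"
definition colS :: "nat set \<Rightarrow> nat \<Rightarrow> nat" where
  "colS S v = (if v \<in> S then 1 else 0)"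

lemma GG0: "GG a b i 0 = wc a b i"
  by (simp add: GG_def fam_def)

lemma wc_ne: "wc a b i \<noteq> 0"
  by (simp add: wc_def axis_eq_0_iff)

lemma M_val:
  assumes "a \<noteq> b"
  shows "wc a b j \<bullet> lamc a b i = (if i = 0 \<and> j \<noteq> 0 then 0 else 1)"
  using assms by (simp add: wc_def lamc_def inner_axis_axis inner_add_right)

lemma fin_children: "E \<subseteq> {..<n} \<times> {..<n} \<Longrightarrow> finite (children E v)"
  by (rule finite_subset[of _ "{..<n}"]) (auto simp: children_def)

lemma children_lt: "E \<subseteq> {..<n} \<times> {..<n} \<Longrightarrow> c \<in> children E v \<Longrightarrow> c < n"
  by (auto simp: children_def)

lemma evF_mult:
  assumes E: "E \<subseteq> {..<n} \<times> {..<n}" and g: "\<And>v. v < n \<Longrightarrow> g v = GG a b (col v)"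
  shows "v < n \<Longrightarrow> \<exists>s. evF E g m v 0 = s *\<^sub>R wc a b (col v)"
proof (induction m arbitrary: v)
  case 0 then show ?case using g GG0 by (metis evF.simps(1) scaleR_one)
next
  case (Suc m)
  have "evF E g (Suc m) v 0 = (\<Prod>c\<in>children E v. evF E g m c 0 \<bullet> lamc a b (col v)) *\<^sub>R g v 0"
    by (rule evF_Suc_fam[OF fin_children[OF E]]) (simp add: g Suc.prems GG_def)
  then show ?case using g[OF Suc.prems] GG0 by metis
qed

lemma evF_closed:
  assumes ab: "a \<noteq> b" and E: "E \<subseteq> {..<n} \<times> {..<n}" and g: "\<And>v. v < n \<Longrightarrow> g v = GG a b (colS S v)"
    and cl: "upclosed E S"
  shows "v < n \<Longrightarrow> evF E g m v 0 = wc a b (colS S v)"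
proof (induction m arbitrary: v)
  case 0 then show ?case using g GG0 by simp
next
  case (Suc m)
  have "evF E g (Suc m) v 0 = (\<Prod>c\<in>children E v. evF E g m c 0 \<bullet> lamc a b (colS S v)) *\<^sub>R g v 0"
    by (rule evF_Suc_fam[OF fin_children[OF E]]) (simp add: g Suc.prems GG_def)
  also have "(\<Prod>c\<in>children E v. evF E g m c 0 \<bullet> lamc a b (colS S v)) = 1"
  proof (rule prod.neutral, rule ballI)
    fix c assume c: "c \<in> children E v"
    have "c < n" using children_lt[OF E c] .
    then have "evF E g m c 0 = wc a b (colS S c)" by (rule Suc.IH)
    moreover have "\<not> (colS S v = 0 \<and> colS S c \<noteq> 0)"
      using cl c unfolding upclosed_def children_def colS_def by auto
    ultimately show "evF E g m c 0 \<bullet> lamc a b (colS S v) = 1" using M_val[OF ab] by simp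
  qed
  finally show ?case using g[OF Suc.prems] GG0 by simp
qed

lemma evF_bad:
  assumes ab: "a \<noteq> b" and E: "E \<subseteq> {..<n} \<times> {..<n}" and g: "\<And>v. v < n \<Longrightarrow> g v = GG a b (colS S v)"
    and st: "(s, t) \<in> E" "t \<in> S" "s \<notin> S"
  shows "(r, s) \<in> E ^^ d \<Longrightarrow> r < n \<Longrightarrow> d < m \<Longrightarrow> evF E g m r 0 = 0"
proof (induction d arbitrary: r m)
  case 0
  then have rs: "r = s" by simp
  obtain m' where m: "m = Suc m'" using 0 by (cases m) auto
  have "evF E g (Suc m') r 0 = (\<Prod>c\<in>children E r. evF E g m' c 0 \<bullet> lamc a b (colS S r)) *\<^sub>R g r 0"
    by (rule evF_Suc_fam[OF fin_children[OF E]]) (simp add: g 0 GG_def)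
  also have "(\<Prod>c\<in>children E r. evF E g m' c 0 \<bullet> lamc a b (colS S r)) = 0"
  proof (rule prod_zero)
    show "finite (children E r)" by (rule fin_children[OF E])
    have tc: "t \<in> children E r" using st rs by (simp add: children_def)
    have "t < n" using st E by auto
    then obtain sc where "evF E g m' t 0 = sc *\<^sub>R wc a b (colS S t)" using evF_mult[of E n g a b "colS S", OF E g] by blast
    then have "evF E g m' t 0 \<bullet> lamc a b (colS S r) = 0"
      using M_val[OF ab] st rs by (simp add: colS_def)
    then show "\<exists>c\<in>children E r. evF E g m' c 0 \<bullet> lamc a b (colS S r) = 0" using tc by blast
  qed
  finally show ?case using m by simp
next
  case (Suc d)
  obtain r' where r': "(r, r') \<in> E" "(r', s) \<in> E ^^ d" using relpow_Suc_E2[OF Suc.prems(1)] by blast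
  obtain m' where m: "m = Suc m'" using Suc by (cases m) auto
  have "evF E g (Suc m') r 0 = (\<Prod>c\<in>children E r. evF E g m' c 0 \<bullet> lamc a b (colS S r)) *\<^sub>R g r 0"
    by (rule evF_Suc_fam[OF fin_children[OF E]]) (simp add: g Suc.prems GG_def)
  also have "(\<Prod>c\<in>children E r. evF E g m' c 0 \<bullet> lamc a b (colS S r)) = 0"
  proof (rule prod_zero)
    show "finite (children E r)" by (rule fin_children[OF E])
    have tc: "r' \<in> children E r" using r' by (simp add: children_def)
    have "r' < n" using r' E by auto
    then have "evF E g m' r' 0 = 0" using Suc.IH[OF r'(2)] Suc.prems m by simp
    then have "evF E g m' r' 0 \<bullet> lamc a b (colS S r) = 0" by simp
    then show "\<exists>c\<in>children E r. evF E g m' c 0 \<bullet> lamc a b (colS S r) = 0" using tc by blast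
  qed
  finally show ?case using m by simp
qed

lemma F_char:
  assumes ab: "a \<noteq> b" and R: "E \<in> RT n" and g: "\<And>v. v < n \<Longrightarrow> g v = GG a b (colS S v)"
  shows "F n E g 0 \<noteq> 0 \<longleftrightarrow> upclosed E S"
proof -
  obtain r where r: "r < n" "\<And>v. (v, r) \<notin> E" "\<And>w. w < n \<Longrightarrow> w \<noteq> r \<Longrightarrow> \<exists>!v. (v, w) \<in> E"
    "\<And>w. w < n \<Longrightarrow> (r, w) \<in> E\<^sup>*" "E \<subseteq> {..<n} \<times> {..<n}" using RT_D[OF R] by blast
  have F: "F n E g = evF E g n r" unfolding F_def RT_root_unique[OF R r(1) r(2)] ..
  show ?thesis
  proof
    assume "upclosed E S"
    then show "F n E g 0 \<noteq> 0" using evF_closed[OF ab r(5) g _ r(1)] F wc_ne by metis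
  next
    assume F0: "F n E g 0 \<noteq> 0"
    show "upclosed E S"
    proof (rule ccontr)
      assume "\<not> upclosed E S"
      then obtain s t where st: "(s, t) \<in> E" "t \<in> S" "s \<notin> S" unfolding upclosed_def by blast
      have "s < n" using st r(5) by auto
      then obtain d where d: "(r, s) \<in> E ^^ d" using r(4) rtrancl_power by blast
      have "d < n" using RT_depth_bound[OF R r(1) r(2) d] .
      have "evF E g n r 0 = 0" using evF_bad[OF ab r(5) g st d r(1) \<open>d < n\<close>] .
      then show False using F0 F by simp
    qed
  qed
qed



lemma two_elems:
  assumes "CARD('d::finite) \<ge> 2"
  obtains a b :: "'d::finite" where "a \<noteq> b"
proof -
  have "\<exists>a b :: 'd::finite. a \<noteq> b"
  proof (rule ccontr)
    assume "\<not> ?thesis"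
    then have "\<forall>a b :: 'd. a = b" by blast
    then have u: "UNIV = {undefined :: 'd}" by blast
    have "CARD('d) = 1" unfolding u by simp
    with assms show False by simp
  qed
  then show ?thesis using that by blast
qed

lemma inj_part:
  fixes H :: "(nat \<Rightarrow> nat) \<Rightarrow> ('c \<times> nat list) set \<Rightarrow> ('d::finite) wmap"
  assumes ab: "(a::'d) \<noteq> b"
    and comp: "compatible_RT 2 CD act H p"
    and R1: "E1 \<in> RT n" and R2: "E2 \<in> RT n" and peq: "p n E1 = p n E2"
  shows "E1 = E2"
proof (rule RT_eq[OF R1 R2])
  fix S assume S: "S \<subseteq> {..<n}"
  define x where "x = map (colS S) [0..<n]"
  define k where "k = (\<lambda>i. if i < 2 then count_list x i else 0)"
  have lx: "length x = n" by (simp add: x_def)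
  have setx: "set x \<subseteq> {..<2}" by (auto simp: x_def colS_def)
  have supp: "supp_ok 2 k" by (simp add: supp_ok_def k_def)
  have "sum (count_list x) {..<2} = length x" by (rule sum_count_set[OF setx]) simp
  then have xw: "x \<in> words 2 k" using setx by (simp add: words_def k_def)
  have C: "Crestrict 2 (Fk n Ei x) = Crestrict 2 (H k (lclass CD act (p n Ei, x)))" if "Ei \<in> RT n" for Ei
    using comp supp xw lx that unfolding compatible_RT_def by blast
  have eqC: "Crestrict 2 (Fk n E1 x :: 'd wmap) = Crestrict 2 (Fk n E2 x)"
    using C[OF R1] C[OF R2] peq by metis
  define fs :: "nat \<Rightarrow> 'd vf" where "fs = (\<lambda>i. GG a b i)"
  have sm: "\<forall>i<2. smooth (fs i)" by (simp add: fs_def GG_def smooth_fam)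
  define g where "g = (\<lambda>v. (\<lambda>i. if i < 2 then fs i else (\<lambda>_. 0)) (x ! v))"
  have Fi: "Crestrict 2 (Fk n Ei x :: 'd wmap) fs = F n Ei g" for Ei
    using sm by (simp add: Crestrict_def Fk_def g_def)
  have Feq: "F n E1 g = F n E2 g" using Fi[of E1] Fi[of E2] eqC by metis
  have gv: "g v = GG a b (colS S v)" if "v < n" for v
    using that by (simp add: g_def x_def fs_def colS_def)
  show "upclosed E1 S \<longleftrightarrow> upclosed E2 S"
    using F_char[OF ab R1 gv] F_char[OF ab R2 gv] Feq by simp
qed


theorem theorem6p1:
  fixes CD :: "nat \<Rightarrow> 'c set"
    and act :: "nat \<Rightarrow> (nat \<Rightarrow> nat) \<Rightarrow> 'c \<Rightarrow> 'c"
    and H :: "(nat \<Rightarrow> nat) \<Rightarrow> ('c \<times> nat list) set \<Rightarrow> ('d::finite) wmap"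
    and p :: "nat \<Rightarrow> (nat \<times> nat) set \<Rightarrow> 'c"
  assumes "CARD('d) \<ge> 2"
    and "weak_comb_descr TYPE('d) 2 CD act H"
    and "compatible_RT 2 CD act H p"
  shows "\<forall>n. bij_betw (p n) (RT n) (CD n)"
proof -
  obtain a b :: 'd where ab: "a \<noteq> b" using two_elems[OF assms(1)] by blast
  show ?thesis
  proof
    fix n
    have img: "p n ` RT n = CD n" using assms(3) unfolding compatible_RT_def by blast
    have "inj_on (p n) (RT n)"
      by (intro inj_onI, rule inj_part[OF ab assms(3)], assumption+)
    then show "bij_betw (p n) (RT n) (CD n)" using img by (simp add: bij_betw_def)
  qed
qed

end
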